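(* In the Uniform Price Auction, for every value profile and every agent $i$, the payment satisfies $\pi_i\le B_i$.
   Context: Uniform Price Auction: one unit of a divisible good, $n$ agents with values per unit $v_i>0$ and publicly known budgets $B_i>0$. Relabel agents so that $v_1\ge\dots\ge v_n$ and set $v_{n+1}=0$. Let $k\in\{0,\dots,n\}$ be the largest integer with $\sum_{j=1}^kB_j\le v_k$ (the empty sum is $0$, and $k=0$ is always admissible). Case I: if $\sum_{j=1}^kB_j>v_{k+1}$, allocate $x_i=B_i/\sum_{j=1}^kB_j$ for $i\le k$ and $0$ to everyone else. Case II: if $\sum_{j=1}^kB_j\le v_{k+1}$, allocate $x_i=B_i/v_{k+1}$ for $i\le k$, $x_{k+1}=1-\sum_{j=1}^kx_j$, and $0$ to everyone else. Payments are given by Myerson's formula $\pi_i(v)=v_ix_i(v)-\int_0^{v_i}x_i(u,v_{-i})\,du$. *)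

theory Defs
  imports "HOL-Analysis.Analysis"
begin

text \<open>Agents are indexed 0,...,n-1. Values v and budgets B are functions on nat;
  only the entries below n matter.\<close>

definition rank :: "(nat \<Rightarrow> real) \<Rightarrow> nat \<Rightarrow> nat \<Rightarrow> nat" where
  "rank v n i = card {j. j < n \<and> (v j > v i \<or> (v j = v i \<and> j < i))} + 1"

definition agent :: "(nat \<Rightarrow> real) \<Rightarrow> nat \<Rightarrow> nat \<Rightarrow> nat" where
  "agent v n k = (THE i. i < n \<and> rank v n i = k)"

definition sval :: "(nat \<Rightarrow> real) \<Rightarrow> nat \<Rightarrow> nat \<Rightarrow> real" where
  "sval v n k = (if 1 \<le> k \<and> k \<le> n then v (agent v n k) else 0)"

definition sbud :: "(nat \<Rightarrow> real) \<Rightarrow> (nat \<Rightarrow> real) \<Rightarrow> nat \<Rightarrow> nat \<Rightarrow> real" where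
  "sbud v B n k = (\<Sum>j\<in>{1..k}. B (agent v n j))"

definition kstar :: "(nat \<Rightarrow> real) \<Rightarrow> (nat \<Rightarrow> real) \<Rightarrow> nat \<Rightarrow> nat" where
  "kstar v B n = Max {k. k \<le> n \<and> (k = 0 \<or> sbud v B n k \<le> sval v n k)}"

definition alloc :: "(nat \<Rightarrow> real) \<Rightarrow> (nat \<Rightarrow> real) \<Rightarrow> nat \<Rightarrow> nat \<Rightarrow> real" where
  "alloc v B n i =
     (let k = kstar v B n; S = sbud v B n k; r = rank v n i in
      if S > sval v n (k + 1) then
        (if r \<le> k then B i / S else 0)
      else
        (if r \<le> k then B i / sval v n (k + 1)
         else if r = k + 1 then 1 - (\<Sum>j\<in>{1..k}. B (agent v n j) / sval v n (k + 1))
         else 0))"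

text \<open>Myerson payment: v_i x_i(v) - integral_0^{v_i} x_i(u, v_{-i}) du.\<close>
definition payment :: "(nat \<Rightarrow> real) \<Rightarrow> (nat \<Rightarrow> real) \<Rightarrow> nat \<Rightarrow> nat \<Rightarrow> real" where
  "payment v B n i = v i * alloc v B n i - integral {0..v i} (\<lambda>u. alloc (v(i := u)) B n i)"

end

theory Submission
  imports Defs
begin


definition prec :: "(nat \<Rightarrow> real) \<Rightarrow> nat \<Rightarrow> nat \<Rightarrow> bool" where
  "prec v l j \<longleftrightarrow> v l > v j \<or> (v l = v j \<and> l < j)"

lemma rank_prec: "rank v n j = card {l. l<n \<and> prec v l j} + 1"
  by (simp add: rank_def prec_def)

lemma prec_total: "l \<noteq> j \<Longrightarrow> prec v l j \<or> prec v j l" by (auto simp: prec_def)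
lemma prec_asym: "prec v l j \<Longrightarrow> \<not> prec v j l" by (auto simp: prec_def)
lemma prec_trans: "prec v a b \<Longrightarrow> prec v b c \<Longrightarrow> prec v a c" by (auto simp: prec_def)
lemma prec_irrefl: "\<not> prec v j j" by (auto simp: prec_def)

lemma rank_less: assumes "prec v j l" "j<n" shows "rank v n j < rank v n l"
proof -
  have "{x. x<n \<and> prec v x j} \<subset> {x. x<n \<and> prec v x l}"
    using prec_trans[of v _ j l] prec_irrefl[of v j] assms by auto
  then have "card {x. x<n \<and> prec v x j} < card {x. x<n \<and> prec v x l}"
    by (rule psubset_card_mono[rotated]) auto
  then show ?thesis by (simp add: rank_prec)
qed

lemma rank_ge1: "1 \<le> rank v n j" by (simp add: rank_def)

lemma rank_le: assumes "j<n" shows "rank v n j \<le> n"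
proof -
  have "{x. x<n \<and> prec v x j} \<subseteq> {..<n} - {j}" using prec_irrefl by auto
  then have "card {x. x<n \<and> prec v x j} \<le> card ({..<n} - {j})" by (intro card_mono) auto
  also have "\<dots> = n - 1" using assms by simp
  finally show ?thesis using assms by (simp add: rank_prec)
qed

lemma rank_inj: "inj_on (rank v n) {..<n}"
proof (rule inj_onI)
  fix a b assume "a \<in> {..<n}" "b \<in> {..<n}" "rank v n a = rank v n b"
  then show "a = b" using prec_total[of a b v] rank_less[of v a b n] rank_less[of v b a n] by force
qed

lemma rank_image: "rank v n ` {..<n} = {1..n}"
proof -
  have sub: "rank v n ` {..<n} \<subseteq> {1..n}" using rank_ge1 rank_le by auto
  have "card (rank v n ` {..<n}) = n" using card_image[OF rank_inj] by simp
  then show ?thesis using sub by (intro card_subset_eq) auto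
qed

lemma agent_spec: assumes "1 \<le> m" "m \<le> n"
  shows "agent v n m < n \<and> rank v n (agent v n m) = m"
proof -
  have "\<exists>!j. j < n \<and> rank v n j = m"
  proof -
    from assms rank_image[of v n] obtain j where "j<n" "rank v n j = m"
      by (metis atLeastAtMost_iff imageE lessThan_iff)
    then show ?thesis using rank_inj[of v n] by (auto dest: inj_onD)
  qed
  then show ?thesis unfolding agent_def by (rule theI')
qed

lemma agent_rank: assumes "j < n" shows "agent v n (rank v n j) = j"
  unfolding agent_def
  by (rule the_equality) (use assms rank_inj[of v n] in \<open>auto dest: inj_onD\<close>)

lemma rank_le_imp: assumes "j<n" "l<n" "rank v n j \<le> rank v n l" shows "v l \<le> v j"
proof (cases "j = l")
  case False
  then have "prec v j l" using prec_total[of j l v] rank_less[of v l j n] assms by force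
  then show ?thesis by (auto simp: prec_def)
qed simp

lemma sval_le: assumes "j<n" "1 \<le> m" "m \<le> n" "rank v n j \<le> m" shows "sval v n m \<le> v j"
  using agent_spec[OF assms(2,3), of v] rank_le_imp[of j n "agent v n m" v] assms
  by (simp add: sval_def)

lemma sval_ge: assumes "j<n" "1 \<le> m" "m \<le> rank v n j" shows "v j \<le> sval v n m"
proof -
  have "m \<le> n" using rank_le[OF assms(1), of v] assms by simp
  then show ?thesis
  using agent_spec[OF assms(2) \<open>m\<le>n\<close>, of v] rank_le_imp[of "agent v n m" n j v] assms
  by (simp add: sval_def)
qed

definition topset where "topset v n m = {j. j < n \<and> rank v n j \<le> m}"

lemma sbud_top: assumes "m \<le> n" shows "sbud v B n m = sum B (topset v n m)"
proof -
  have "bij_betw (agent v n) {1..m} (topset v n m)"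
    by (rule bij_betw_byWitness[where f'="rank v n"])
      (use assms agent_spec[of _ n v] agent_rank[of _ n v] rank_ge1[of v n] in \<open>auto simp: topset_def\<close>)
  then show ?thesis unfolding sbud_def by (rule sum.reindex_bij_betw)
qed

lemma kstar_props:
  "kstar v B n \<le> n \<and> (kstar v B n = 0 \<or> sbud v B n (kstar v B n) \<le> sval v n (kstar v B n))
   \<and> (\<forall>m. m \<le> n \<and> (m = 0 \<or> sbud v B n m \<le> sval v n m) \<longrightarrow> m \<le> kstar v B n)"
proof -
  let ?M = "{k. k \<le> n \<and> (k = 0 \<or> sbud v B n k \<le> sval v n k)}"
  have f: "finite ?M" by (rule finite_subset[of _ "{..n}"]) auto
  have ne: "?M \<noteq> {}" by auto
  show ?thesis unfolding kstar_def using Max_in[OF f ne] Max_ge[OF f] by auto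
qed



lemma alloc_bounds:
  assumes Bpos: "\<forall>j<n. B j > 0" and i: "i < n"
  shows "0 \<le> alloc v B n i \<and> alloc v B n i \<le> 1"
proof -
  define K where "K = kstar v B n"
  define S where "S = sbud v B n K"
  define w where "w = sval v n (K+1)"
  have Kn: "K \<le> n" using kstar_props K_def by blast
  have Stop: "S = sum B (topset v n K)" using sbud_top[OF Kn] S_def by simp
  have S0: "0 \<le> S" unfolding Stop by (rule sum_nonneg) (use Bpos in \<open>auto simp: topset_def less_imp_le\<close>)
  have Bi: "rank v n i \<le> K \<Longrightarrow> B i \<le> S"
    unfolding Stop by (rule member_le_sum) (use Bpos i in \<open>auto simp: topset_def less_imp_le\<close>)
  have sumeq: "(\<Sum>j\<in>{1..K}. B (agent v n j) / w) = S / w"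
    by (simp add: S_def sbud_def sum_divide_distrib)
  have Bi0: "B i > 0" using Bpos i by simp
  show ?thesis
    unfolding alloc_def Let_def K_def[symmetric] S_def[symmetric] w_def[symmetric] sumeq
    using S0 Bi Bi0
    by (auto simp: field_simps divide_le_eq_1)
qed


lemma alloc_raise:
  assumes i: "i < n" and r: "rank v n i \<le> kstar v B n"
    and u1: "u > sval v n (kstar v B n + 1)" and u2: "u > sbud v B n (kstar v B n)"
  shows "alloc (v(i:=u)) B n i = alloc v B n i"
proof -
  define K where "K = kstar v B n"
  define v' where "v' = v(i:=u)"
  define T where "T = topset v n K"
  note kp = kstar_props[of v B n, folded K_def]
  have Kn: "K \<le> n" using kp by simp
  have Kadm: "K = 0 \<or> sbud v B n K \<le> sval v n K" using kp by simp
  have Kmax: "\<And>m. m \<le> n \<Longrightarrow> (m = 0 \<or> sbud v B n m \<le> sval v n m) \<Longrightarrow> m \<le> K"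
    using kp by simp
  have rK: "rank v n i \<le> K" using r K_def by simp
  have K1: "1 \<le> K" using rK rank_ge1[of v n i] by simp
  have u1': "u > sval v n (K+1)" and u2': "u > sbud v B n K" using u1 u2 K_def by auto
  have iT: "i \<in> T" using i rK by (simp add: T_def topset_def)
  have small: "v j \<le> sval v n (K+1)" if "j<n" "j \<notin> T" for j
    using sval_ge[of j n "K+1" v] that by (simp add: T_def topset_def)
  have rank_out: "rank v' n j = rank v n j" if j: "j<n" "j \<notin> T" for j
  proof -
    have ji: "j \<noteq> i" using iT j by auto
    have "{l. l<n \<and> prec v' l j} = {l. l<n \<and> prec v l j}"
    proof (intro Collect_cong conj_cong refl)
      fix l assume "l < n"
      show "prec v' l j = prec v l j"
      proof (cases "l = i")
        case True
        have "prec v' i j" using small[OF j] u1' ji by (simp add: v'_def prec_def)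
        moreover have "prec v i j"
        proof -
          have "rank v n i < rank v n j" using rK j by (simp add: T_def topset_def)
          then have "\<not> prec v j i" using rank_less[of v j i n] j by force
          then show ?thesis using prec_total[of i j v] ji by auto
        qed
        ultimately show ?thesis using True by simp
      next
        case False then show ?thesis using ji by (simp add: v'_def prec_def)
      qed
    qed
    then show ?thesis by (simp add: rank_prec)
  qed
  have rank_in: "rank v' n j \<le> K" if j: "j<n" "j \<in> T" for j
  proof (rule ccontr)
    assume "\<not> rank v' n j \<le> K"
    then have gt: "K < rank v' n j" by simp
    have le: "rank v' n j \<le> n" using rank_le[OF j(1)] by simp
    define l where "l = agent v n (rank v' n j)"
    have l: "l < n" "rank v n l = rank v' n j" using agent_spec[of "rank v' n j" n v] gt le
      by (auto simp: l_def)
    have lT: "l \<notin> T" using l gt by (simp add: T_def topset_def)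
    then have "rank v' n l = rank v' n j" using rank_out[OF l(1) lT] l by simp
    then have "l = j" using rank_inj[of v' n] l(1) j(1) by (auto dest: inj_onD)
    then show False using lT j by simp
  qed
  have top_eq: "topset v' n m = topset v n m" if "K \<le> m" for m
  proof -
    have "(rank v' n j \<le> m) = (rank v n j \<le> m)" if "j < n" for j
    proof (cases "j \<in> T")
      case True
      then show ?thesis using rank_in[OF that True] \<open>K \<le> m\<close> by (simp add: T_def topset_def)
    next
      case False
      then show ?thesis using rank_out[OF that False] by simp
    qed
    then show ?thesis by (auto simp: topset_def)
  qed
  have sbud_eq: "sbud v' B n m = sbud v B n m" if "K \<le> m" "m \<le> n" for m
    using sbud_top[OF that(2)] top_eq[OF that(1)] by simp
  have sval_eq: "sval v' n m = sval v n m" if "K + 1 \<le> m" for m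
  proof (cases "m \<le> n")
    case True
    have a: "agent v n m < n" "rank v n (agent v n m) = m" using agent_spec[of m n v] True that by auto
    have aT: "agent v n m \<notin> T" using a that by (simp add: T_def topset_def)
    have "rank v' n (agent v n m) = m" using rank_out[OF a(1) aT] a by simp
    then have "agent v' n m = agent v n m" using agent_rank[OF a(1), of v'] by simp
    moreover have "agent v n m \<noteq> i" using aT iT by auto
    ultimately show ?thesis by (simp add: sval_def v'_def)
  next
    case False then show ?thesis by (simp add: sval_def)
  qed
  have Kadm': "sbud v' B n K \<le> sval v' n K"
  proof -
    define a where "a = agent v' n K"
    have a: "a < n" "rank v' n a = K" using agent_spec[of K n v'] K1 Kn by (auto simp: a_def)
    have aT: "a \<in> T"
    proof (rule ccontr)
      assume "a \<notin> T"
      then have "rank v n a = K" using rank_out[OF a(1)] a(2) by simp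
      then show False using \<open>a \<notin> T\<close> a(1) by (simp add: T_def topset_def)
    qed
    have sK: "sbud v B n K \<le> sval v n K" using Kadm K1 by simp
    have "sbud v B n K \<le> v' a"
    proof (cases "a = i")
      case True then show ?thesis using u2' by (simp add: v'_def)
    next
      case False
      have "sval v n K \<le> v a" using sval_le[of a n K v] a aT K1 Kn by (simp add: T_def topset_def)
      then show ?thesis using sK False by (simp add: v'_def)
    qed
    then show ?thesis using sbud_eq[of K] Kn K1 by (simp add: sval_def a_def)
  qed
  have kstar_eq: "kstar v' B n = K"
    unfolding kstar_def
  proof (rule Max_eqI)
    show "finite {k. k \<le> n \<and> (k = 0 \<or> sbud v' B n k \<le> sval v' n k)}"
      by (rule finite_subset[of _ "{..n}"]) auto
    show "K \<in> {k. k \<le> n \<and> (k = 0 \<or> sbud v' B n k \<le> sval v' n k)}" using Kn Kadm' by simp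
    fix m assume "m \<in> {k. k \<le> n \<and> (k = 0 \<or> sbud v' B n k \<le> sval v' n k)}"
    then have m: "m \<le> n" "m = 0 \<or> sbud v' B n m \<le> sval v' n m" by auto
    show "m \<le> K"
    proof (rule ccontr)
      assume "\<not> m \<le> K"
      then have "K < m" by simp
      then have "sbud v B n m \<le> sval v n m" using m sbud_eq[of m] sval_eq[of m] by simp
      then show False using Kmax[of m] m(1) \<open>K < m\<close> by simp
    qed
  qed
  have ri': "rank v' n i \<le> K" using rank_in[OF i iT] .
  show ?thesis
    unfolding alloc_def Let_def kstar_eq v'_def[symmetric] K_def[symmetric]
    using sbud_eq[of K] Kn sval_eq[of "K+1"] ri' rK by simp
qed


definition agree :: "real set \<Rightarrow> real \<Rightarrow> real \<Rightarrow> bool" where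
  "agree X u u' \<longleftrightarrow> (\<forall>x\<in>X. (x < u \<longleftrightarrow> x < u') \<and> (x \<le> u \<longleftrightarrow> x \<le> u'))"

lemma agree_mono: "agree X u u' \<Longrightarrow> Y \<subseteq> X \<Longrightarrow> agree Y u u'"
  by (auto simp: agree_def)

lemma agree_rank:
  assumes ag: "agree (v ` {..<n}) u u'" and j: "j < n"
  shows "rank (v(i:=u)) n j = rank (v(i:=u')) n j"
proof -
  have c1: "(v b < u) = (v b < u')" "(v b \<le> u) = (v b \<le> u')" if "b < n" for b
    using ag that by (auto simp: agree_def)
  have "{l. l<n \<and> prec (v(i:=u)) l j} = {l. l<n \<and> prec (v(i:=u')) l j}"
  proof (intro Collect_cong)
    fix l
    show "(l<n \<and> prec (v(i:=u)) l j) = (l<n \<and> prec (v(i:=u')) l j)"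
      using c1[of l] c1[of j] j
      by (cases "l = i"; cases "j = i") (auto simp: prec_def)
  qed
  then show ?thesis by (simp add: rank_prec)
qed

lemma agree_agent:
  assumes ag: "agree (v ` {..<n}) u u'"
  shows "agent (v(i:=u)) n m = agent (v(i:=u')) n m"
proof -
  have "(\<lambda>j. j < n \<and> rank (v(i:=u)) n j = m) = (\<lambda>j. j < n \<and> rank (v(i:=u')) n j = m)"
    using agree_rank[OF ag] by auto
  then show ?thesis unfolding agent_def by simp
qed

lemma agree_sbud:
  assumes ag: "agree (v ` {..<n}) u u'"
  shows "sbud (v(i:=u)) B n m = sbud (v(i:=u')) B n m"
  unfolding sbud_def using agree_agent[OF ag] by simp

definition sig :: "real set \<Rightarrow> real \<Rightarrow> real set \<times> real set" where
  "sig X u = ({x\<in>X. x < u}, {x\<in>X. x \<le> u})"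

lemma sig_agree: assumes "sig X u = sig X u'" shows "agree X u u'"
  unfolding agree_def
proof
  fix x assume x: "x \<in> X"
  have "{x\<in>X. x < u} = {x\<in>X. x < u'}" "{x\<in>X. x \<le> u} = {x\<in>X. x \<le> u'}"
    using assms by (simp_all add: sig_def)
  then show "(x < u \<longleftrightarrow> x < u') \<and> (x \<le> u \<longleftrightarrow> x \<le> u')" using x by blast
qed

lemma sig_finite: "finite X \<Longrightarrow> finite (range (sig X))"
  by (rule finite_subset[of _ "Pow X \<times> Pow X"]) (auto simp: sig_def)

definition rep where "rep X p = (SOME u. sig X u = p)"

lemma rep_sig: "sig X (rep X (sig X u)) = sig X u"
  unfolding rep_def by (rule someI) (rule refl)

definition Tset where "Tset v B n i = {sbud (v(i:=u)) B n m | u m. m \<le> n}"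

lemma Tset_finite: "finite (Tset v B n i)"
proof -
  let ?X0 = "v ` {..<n}"
  have sub: "Tset v B n i \<subseteq> (\<lambda>(p,m). sbud (v(i:= rep ?X0 p)) B n m) ` (range (sig ?X0) \<times> {..n})"
  proof
    fix t assume "t \<in> Tset v B n i"
    then obtain u m where t: "t = sbud (v(i:=u)) B n m" "m \<le> n" by (auto simp: Tset_def)
    have "t = sbud (v(i:= rep ?X0 (sig ?X0 u))) B n m"
      using t(1) agree_sbud[OF sig_agree[OF rep_sig[symmetric, of ?X0 u]], of i B m] by simp
    then show "t \<in> (\<lambda>(p,m). sbud (v(i:= rep ?X0 p)) B n m) ` (range (sig ?X0) \<times> {..n})"
      using t(2) by force
  qed
  have fr: "finite (range (sig ?X0))" by (rule sig_finite) simp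
  have "finite ((\<lambda>(p,m). sbud (v(i:= rep ?X0 p)) B n m) ` (range (sig ?X0) \<times> {..n}))"
    by (intro finite_imageI finite_cartesian_product fr finite_atMost)
  then show ?thesis using sub by (rule finite_subset[rotated])
qed

definition params where
  "params v B n i u = (let v' = v(i:=u); K = kstar v' B n in
     (K, sbud v' B n K, rank v' n i, agent v' n (K + 1)))"

definition H :: "(nat \<Rightarrow> real) \<Rightarrow> (nat \<Rightarrow> real) \<Rightarrow> nat \<Rightarrow> nat \<Rightarrow> nat \<times> real \<times> nat \<times> nat \<Rightarrow> real \<Rightarrow> real" where
  "H v B n i q u = (case q of (K, S, r, a) \<Rightarrow>
     (let w = (if 1 \<le> K+1 \<and> K+1 \<le> n then (if a = i then u else v a) else 0) in
      if S > w then (if r \<le> K then B i / S else 0)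
      else (if r \<le> K then B i / w else if r = K+1 then 1 - S / w else 0)))"

lemma alloc_H: "alloc (v(i:=u)) B n i = H v B n i (params v B n i u) u"
  unfolding alloc_def H_def params_def Let_def sval_def
  by (simp add: sum_divide_distrib[symmetric] sbud_def)

lemma H_meas: "H v B n i q \<in> borel_measurable borel"
proof -
  obtain K S r a where q: "q = (K, S, r, a)" by (cases q) auto
  show ?thesis unfolding q H_def prod.case Let_def by measurable
qed



lemma agree_params:
  assumes ag: "agree (v ` {..<n} \<union> Tset v B n i) u u'" and i: "i < n"
  shows "params v B n i u = params v B n i u'"
proof -
  have ag0: "agree (v ` {..<n}) u u'" using agree_mono[OF ag] by blast
  note sb = agree_sbud[OF ag0, of i B]
  note at = agree_agent[OF ag0, of i]
  have cmp: "(sbud (v(i:=u)) B n m \<le> sval (v(i:=u)) n m) = (sbud (v(i:=u')) B n m \<le> sval (v(i:=u')) n m)"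
    if m: "m \<le> n" for m
  proof -
    define c where "c = sbud (v(i:=u)) B n m"
    have cT: "c \<in> Tset v B n i" unfolding c_def Tset_def using m by blast
    then have "(c \<le> u) = (c \<le> u')" using ag by (auto simp: agree_def)
    then show ?thesis unfolding sb[of m, symmetric] c_def[symmetric] sval_def at[of m] by simp
  qed
  have "kstar (v(i:=u)) B n = kstar (v(i:=u')) B n"
    unfolding kstar_def using cmp by (metis (no_types, lifting))
  then show ?thesis unfolding params_def Let_def using sb at agree_rank[OF ag0 i, of i] by simp
qed

lemma finite_X: "finite (v ` {..<n} \<union> Tset v B n i)"
  using Tset_finite by simp

lemma sig_pred:
  assumes "finite X"
  shows "Measurable.pred borel (\<lambda>u. sig X u = p)"
proof -
  have eq: "(sig X u = p) = ((\<forall>x\<in>X. (x<u \<longleftrightarrow> x\<in>fst p) \<and> (x\<le>u \<longleftrightarrow> x\<in>snd p)) \<and> fst p \<subseteq> X \<and> snd p \<subseteq> X)" for u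
    by (cases p) (auto simp: sig_def)
  have 2: "Measurable.pred borel (\<lambda>u. \<forall>x\<in>X. (x<u \<longleftrightarrow> x\<in>fst p) \<and> (x\<le>u \<longleftrightarrow> x\<in>snd p))"
    by (rule pred_intros_finite(3)[OF assms]) measurable
  show ?thesis unfolding eq using 2 by measurable
qed

lemma f_meas:
  assumes i: "i < n"
  shows "(\<lambda>u. alloc (v(i:=u)) B n i) \<in> borel_measurable borel"
proof -
  define X where "X = v ` {..<n} \<union> Tset v B n i"
  have fX: "finite X" unfolding X_def by (rule finite_X)
  define P where "P = range (sig X)"
  have fP: "finite P" unfolding P_def by (rule sig_finite[OF fX])
  have eq: "alloc (v(i:=u)) B n i = (\<Sum>p\<in>P. if sig X u = p then H v B n i (params v B n i (rep X p)) u else 0)" for u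
  proof -
    have "params v B n i (rep X (sig X u)) = params v B n i u"
      using agree_params[OF _ i, of v B "rep X (sig X u)" u] sig_agree[OF rep_sig[of X u]] by (simp add: X_def)
    moreover have "sig X u \<in> P" by (simp add: P_def)
    ultimately show ?thesis using fP by (simp add: alloc_H)
  qed
  show ?thesis unfolding eq
    by (intro borel_measurable_sum measurable_If H_meas borel_measurable_const)
      (use sig_pred[OF fX] in \<open>auto simp: Measurable.pred_def\<close>)
qed

lemma f_integrable:
  assumes Bpos: "\<forall>j<n. B j > 0" and i: "i < n"
  shows "(\<lambda>u. alloc (v(i:=u)) B n i) integrable_on {a..b}"
proof (rule measurable_bounded_by_integrable_imp_integrable_real[where g="\<lambda>_. 1"])
  show "(\<lambda>u. alloc (v(i:=u)) B n i) \<in> borel_measurable (lebesgue_on {a..b})"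
    using f_meas[OF i, of v B] by (simp add: measurable_completion measurable_restrict_space1)
  show "(\<lambda>_. 1::real) integrable_on {a..b}" by (rule integrable_const_ivl)
  show "\<bar>alloc (v(i:=u)) B n i\<bar> \<le> 1" for u
    using alloc_bounds[OF Bpos i, of "v(i:=u)"] by simp
  show "{a..b} \<in> sets lebesgue" by simp
qed



theorem mainTheorem7:
  fixes v B :: "nat \<Rightarrow> real" and n i :: nat
  assumes "\<forall>j<n. v j > 0" and "\<forall>j<n. B j > 0" and "i < n"
  shows "payment v B n i \<le> B i"
proof -
  note vpos = assms(1) and Bpos = assms(2) and i = assms(3)
  define f where "f = (\<lambda>u. alloc (v(i:=u)) B n i)"
  define x where "x = alloc v B n i"
  have pay: "payment v B n i = v i * x - integral {0..v i} f"
    unfolding payment_def f_def x_def by simp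
  have int: "f integrable_on {a..b}" for a b unfolding f_def by (rule f_integrable[OF Bpos i])
  have fnn: "0 \<le> f u" for u unfolding f_def using alloc_bounds[OF Bpos i] by blast
  have I0: "0 \<le> integral {a..b} f" for a b by (rule integral_nonneg[OF int fnn])
  have vi: "v i > 0" using vpos i by simp
  have Bi: "B i > 0" using Bpos i by simp
  define K where "K = kstar v B n"
  define S where "S = sbud v B n K"
  define w where "w = sval v n (K+1)"
  note kp = kstar_props[of v B n, folded K_def]
  have Kn: "K \<le> n" using kp by simp
  have Kmax: "\<And>m. m \<le> n \<Longrightarrow> (m = 0 \<or> sbud v B n m \<le> sval v n m) \<Longrightarrow> m \<le> K"
    using kp by simp
  have Stop: "S = sum B (topset v n K)" using sbud_top[OF Kn] S_def by simp
  have sumeq: "(\<Sum>j\<in>{1..K}. B (agent v n j) / w) = S / w"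
    by (simp add: S_def sbud_def sum_divide_distrib)
  have xdef: "x = (if S > w then (if rank v n i \<le> K then B i / S else 0)
      else (if rank v n i \<le> K then B i / w else if rank v n i = K + 1 then 1 - S / w else 0))"
    unfolding x_def alloc_def Let_def K_def[symmetric] S_def[symmetric] w_def[symmetric] sumeq ..
  show ?thesis
  proof (cases "rank v n i \<le> K")
    case rK: True
    define c where "c = (if S > w then S else w)"
    have BS: "B i \<le> S"
      unfolding Stop by (rule member_le_sum) (use Bpos i rK in \<open>auto simp: topset_def less_imp_le\<close>)
    have cS: "S \<le> c" "w \<le> c" by (auto simp: c_def)
    have cpos: "c > 0" using BS Bi cS by simp
    have xc: "x = B i / c" using rK by (simp add: xdef c_def)
    have fc: "f u = x" if "u > c" for u
      unfolding f_def x_def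
      by (rule alloc_raise[OF i rK[unfolded K_def]]) (use that cS in \<open>auto simp: S_def w_def K_def\<close>)
    show ?thesis
    proof (cases "v i \<le> c")
      case True
      have "v i * x \<le> c * x" using True xc Bi cpos by (intro mult_right_mono) auto
      also have "c * x = B i" using xc cpos by simp
      finally show ?thesis unfolding pay using I0[of 0 "v i"] by simp
    next
      case False
      have split: "integral {0..c} f + integral {c..v i} f = integral {0..v i} f"
        using Henstock_Kurzweil_Integration.integral_combine[where a=0 and c=c and b="v i" and f=f] cpos False int by simp
      have "integral {c..v i} f = integral {c..v i} (\<lambda>_. x)"
        by (rule integral_spike[of "{c}"]) (auto simp: fc)
      also have "\<dots> = (v i - c) * x" using False by simp
      finally have "integral {0..v i} f \<ge> (v i - c) * x" using split I0[of 0 c] by simp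
      then have "payment v B n i \<le> c * x" unfolding pay by (simp add: algebra_simps)
      also have "c * x = B i" using xc cpos by simp
      finally show ?thesis .
    qed
  next
    case rK: False
    show ?thesis
    proof (cases "\<not> S > w \<and> rank v n i = K + 1")
      case True
      have K1n: "K + 1 \<le> n" using True rank_le[OF i, of v] by simp
      have ag: "agent v n (K+1) = i" using agent_rank[OF i, of v] True by simp
      have wv: "w = v i" using K1n ag by (simp add: w_def sval_def)
      have "\<not> sbud v B n (K+1) \<le> sval v n (K+1)" using Kmax[of "K+1"] K1n by auto
      moreover have "sbud v B n (K+1) = S + B i" using ag by (simp add: sbud_def S_def)
      ultimately have lt: "v i < S + B i" using wv w_def by simp
      have "x = 1 - S / v i" using True wv by (simp add: xdef)
      then have "v i * x = v i - S" using vi by (simp add: field_simps)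
      then show ?thesis unfolding pay using I0[of 0 "v i"] lt by simp
    next
      case False
      then have "x = 0" using rK by (auto simp: xdef)
      then show ?thesis unfolding pay using I0[of 0 "v i"] Bi by simp
    qed
  qed
qed

end
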